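(* For each $\gamma\in\mathbb{R}$ let $\hat g_{+,\gamma}$ be any minimizer of $\hat h_{+,\gamma}$ over $\mathcal{F}$, and let $\epsilon_{\text{abs}}>0$. Then: (1) $\hat h_{+,\gamma}(\hat g_{+,\gamma})$ is monotonically increasing in $\gamma$; (2) $\hat e_{\text{orig}}(\hat g_{+,\gamma})$ is monotonically decreasing in $\gamma$ for $\gamma\le0$, and if $\epsilon_{\text{abs}}\ge\min_{f\in\mathcal{F}}\hat e_{\text{orig}}(f)$ then $\hat h_{+,0}(\hat g_{+,0})\ge0$ and $\hat e_{\text{orig}}(\hat g_{+,0})\le\epsilon_{\text{abs}}$; (3) the quantity $\left\{\frac{\hat h_{+,\gamma}(\hat g_{+,\gamma})}{\epsilon_{\text{abs}}}-1\right\}\gamma^{-1}$ is monotonically increasing in $\gamma$ over the range where $\hat e_{\text{orig}}(\hat g_{+,\gamma})\le\epsilon_{\text{abs}}$ and $\gamma<0$, and monotonically decreasing in $\gamma$ over the range where $\hat e_{\text{orig}}(\hat g_{+,\gamma})>\epsilon_{\text{abs}}$ and $\gamma<0$.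
   Context: Setting: $\mathcal{F}$ a set of prediction models, $L\ge0$ a loss, and a fixed observed sample $(\mathbf{y}_{[i]},\mathbf{X}_{1[i]},\mathbf{X}_{2[i]})$, $i=1,\dots,n$, $n\ge2$. $\hat e_{\text{orig}}(f)=\frac1n\sum_iL\{f,(\mathbf{y}_{[i]},\mathbf{X}_{1[i]},\mathbf{X}_{2[i]})\}$; $\hat e_{\text{switch}}(f)=\frac1{n(n-1)}\sum_i\sum_{j\ne i}L\{f,(\mathbf{y}_{[j]},\mathbf{X}_{1[i]},\mathbf{X}_{2[j]})\}$. For $\gamma\in\mathbb{R}$, $\hat h_{+,\gamma}(f):=\hat e_{\text{orig}}(f)+\gamma\hat e_{\text{switch}}(f)$. Standing assumptions: $\min_{f\in\mathcal{F}}\hat e_{\text{orig}}(f)>0$ and minimizers of $\hat h_{+,\gamma}$ over $\mathcal{F}$ exist for every $\gamma$. *)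

theory Defs
  imports Main "HOL.Real"
begin

definition e_orig ::
  "('f \<Rightarrow> 'y \<times> 'a \<times> 'b \<Rightarrow> real) \<Rightarrow> (nat \<Rightarrow> 'y) \<Rightarrow> (nat \<Rightarrow> 'a) \<Rightarrow> (nat \<Rightarrow> 'b) \<Rightarrow> nat \<Rightarrow> 'f \<Rightarrow> real"
  where "e_orig L y X1 X2 n f = (1 / real n) * (\<Sum>i<n. L f (y i, X1 i, X2 i))"

definition e_switch ::
  "('f \<Rightarrow> 'y \<times> 'a \<times> 'b \<Rightarrow> real) \<Rightarrow> (nat \<Rightarrow> 'y) \<Rightarrow> (nat \<Rightarrow> 'a) \<Rightarrow> (nat \<Rightarrow> 'b) \<Rightarrow> nat \<Rightarrow> 'f \<Rightarrow> real"
  where "e_switch L y X1 X2 n f =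
    (1 / (real n * (real n - 1))) * (\<Sum>i<n. \<Sum>j\<in>{..<n} - {i}. L f (y j, X1 i, X2 j))"

definition h_plus ::
  "('f \<Rightarrow> 'y \<times> 'a \<times> 'b \<Rightarrow> real) \<Rightarrow> (nat \<Rightarrow> 'y) \<Rightarrow> (nat \<Rightarrow> 'a) \<Rightarrow> (nat \<Rightarrow> 'b) \<Rightarrow> nat \<Rightarrow> real \<Rightarrow> 'f \<Rightarrow> real"
  where "h_plus L y X1 X2 n \<gamma> f = e_orig L y X1 X2 n f + \<gamma> * e_switch L y X1 X2 n f"

end

theory Submission
  imports Defs
begin


lemma phi_inc: fixes a s g1 g2 :: real assumes "g1 \<le> g2" "g2 < 0" "a \<le> 0"
  shows "(a + g1*s)/g1 \<le> (a + g2*s)/g2"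
proof -
  have "a/g1 \<le> a/g2" using assms by (simp add: divide_simps mult_left_mono_neg)
  then show ?thesis using assms by (simp add: add_divide_distrib)
qed
lemma phi_dec: fixes a s g1 g2 :: real assumes "g1 \<le> g2" "g2 < 0" "a \<ge> 0"
  shows "(a + g2*s)/g2 \<le> (a + g1*s)/g1"
proof -
  have "a/g2 \<le> a/g1" using assms by (simp add: divide_simps mult_left_mono)
  then show ?thesis using assms by (simp add: add_divide_distrib)
qed

theorem lemma20:
  fixes F :: "'f set"
    and L :: "'f \<Rightarrow> 'y \<times> 'a \<times> 'b \<Rightarrow> real"
    and y :: "nat \<Rightarrow> 'y" and X1 :: "nat \<Rightarrow> 'a" and X2 :: "nat \<Rightarrow> 'b"
    and n :: nat
    and g :: "real \<Rightarrow> 'f"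
    and eps :: real
  assumes n2: "n \<ge> 2"
    and L_nonneg: "\<And>f z. L f z \<ge> 0"
    and orig_min_exists: "\<exists>f0\<in>F. \<forall>f\<in>F. e_orig L y X1 X2 n f0 \<le> e_orig L y X1 X2 n f"
    and orig_min_pos: "(INF f\<in>F. e_orig L y X1 X2 n f) > 0"
    and g_in: "\<And>\<gamma>. g \<gamma> \<in> F"
    and g_min: "\<And>\<gamma> f. f \<in> F \<Longrightarrow> h_plus L y X1 X2 n \<gamma> (g \<gamma>) \<le> h_plus L y X1 X2 n \<gamma> f"
    and eps_pos: "eps > 0"
  shows "(\<forall>\<gamma>1 \<gamma>2. \<gamma>1 \<le> \<gamma>2 \<longrightarrow>
            h_plus L y X1 X2 n \<gamma>1 (g \<gamma>1) \<le> h_plus L y X1 X2 n \<gamma>2 (g \<gamma>2))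
       \<and> (\<forall>\<gamma>1 \<gamma>2. \<gamma>1 \<le> \<gamma>2 \<and> \<gamma>2 \<le> 0 \<longrightarrow>
            e_orig L y X1 X2 n (g \<gamma>2) \<le> e_orig L y X1 X2 n (g \<gamma>1))
       \<and> (eps \<ge> (INF f\<in>F. e_orig L y X1 X2 n f) \<longrightarrow>
            h_plus L y X1 X2 n 0 (g 0) \<ge> 0 \<and> e_orig L y X1 X2 n (g 0) \<le> eps)
       \<and> (\<forall>\<gamma>1 \<gamma>2. \<gamma>1 \<le> \<gamma>2 \<and> \<gamma>2 < 0
            \<and> e_orig L y X1 X2 n (g \<gamma>1) \<le> eps \<and> e_orig L y X1 X2 n (g \<gamma>2) \<le> eps \<longrightarrow>
            (h_plus L y X1 X2 n \<gamma>1 (g \<gamma>1) / eps - 1) / \<gamma>1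
              \<le> (h_plus L y X1 X2 n \<gamma>2 (g \<gamma>2) / eps - 1) / \<gamma>2)
       \<and> (\<forall>\<gamma>1 \<gamma>2. \<gamma>1 \<le> \<gamma>2 \<and> \<gamma>2 < 0
            \<and> e_orig L y X1 X2 n (g \<gamma>1) > eps \<and> e_orig L y X1 X2 n (g \<gamma>2) > eps \<longrightarrow>
            (h_plus L y X1 X2 n \<gamma>2 (g \<gamma>2) / eps - 1) / \<gamma>2
              \<le> (h_plus L y X1 X2 n \<gamma>1 (g \<gamma>1) / eps - 1) / \<gamma>1)"
  proof -
  define Eo where "Eo = e_orig L y X1 X2 n"
  define S where "S = e_switch L y X1 X2 n"
  define H where "H = (\<lambda>\<gamma>. h_plus L y X1 X2 n \<gamma> (g \<gamma>))"
  have hp: "\<And>\<gamma> f. h_plus L y X1 X2 n \<gamma> f = Eo f + \<gamma> * S f"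
    by (simp add: h_plus_def Eo_def S_def)
  have Snn: "\<And>f. S f \<ge> 0"
  proof -
    fix f
    have "real n * (real n - 1) > 0" using n2 by simp
    moreover have "(\<Sum>i<n. \<Sum>j\<in>{..<n} - {i}. L f (y j, X1 i, X2 j)) \<ge> 0"
      by (intro sum_nonneg) (simp add: L_nonneg)
    ultimately show "S f \<ge> 0" by (simp add: S_def e_switch_def)
  qed
  have gm: "\<And>\<gamma> f. f \<in> F \<Longrightarrow> Eo (g \<gamma>) + \<gamma> * S (g \<gamma>) \<le> Eo f + \<gamma> * S f"
    using g_min hp by metis
  have H: "\<And>\<gamma>. H \<gamma> = Eo (g \<gamma>) + \<gamma> * S (g \<gamma>)" by (simp add: H_def hp)
  have p1: "\<forall>\<gamma>1 \<gamma>2. \<gamma>1 \<le> \<gamma>2 \<longrightarrow> H \<gamma>1 \<le> H \<gamma>2"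
  proof (intro allI impI)
    fix a b :: real assume ab: "a \<le> b"
    have "H a \<le> Eo (g b) + a * S (g b)" using gm[OF g_in, of a b] H by simp
    also have "\<dots> \<le> Eo (g b) + b * S (g b)" using ab Snn[of "g b"] by (simp add: mult_right_mono)
    finally show "H a \<le> H b" using H by simp
  qed
  have p2: "\<forall>\<gamma>1 \<gamma>2. \<gamma>1 \<le> \<gamma>2 \<and> \<gamma>2 \<le> 0 \<longrightarrow> Eo (g \<gamma>2) \<le> Eo (g \<gamma>1)"
  proof (intro allI impI)
    fix a b :: real assume ab: "a \<le> b \<and> b \<le> 0"
    have 1: "Eo (g a) + a * S (g a) \<le> Eo (g b) + a * S (g b)" using gm[OF g_in] .
    have 2: "Eo (g b) + b * S (g b) \<le> Eo (g a) + b * S (g a)" using gm[OF g_in] .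
    show "Eo (g b) \<le> Eo (g a)"
    proof (cases "a = b")
      case True then show ?thesis by simp
    next
      case False
      with ab have "a < b" by simp
      from 1 2 have "(b - a) * (S (g b) - S (g a)) \<le> 0" by (simp add: algebra_simps)
      with \<open>a < b\<close> have "S (g b) \<le> S (g a)"
        by (simp add: mult_le_0_iff)
      hence "b * (S (g a) - S (g b)) \<le> 0" using ab by (simp add: mult_nonpos_nonneg)
      with 2 show ?thesis by (simp add: algebra_simps)
    qed
  qed
  have p3: "eps \<ge> (INF f\<in>F. Eo f) \<longrightarrow> H 0 \<ge> 0 \<and> Eo (g 0) \<le> eps"
  proof
    assume e: "eps \<ge> (INF f\<in>F. Eo f)"
    have "Eo (g 0) \<le> (INF f\<in>F. Eo f)"
      using g_in gm[of _ 0] by (intro cINF_greatest) auto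
    moreover have "Eo (g 0) \<ge> 0"
      by (simp add: Eo_def e_orig_def L_nonneg sum_nonneg)
    ultimately show "H 0 \<ge> 0 \<and> Eo (g 0) \<le> eps" using e H by simp
  qed
  have conv: "\<And>\<gamma>. (H \<gamma> / eps - 1) / \<gamma> = ((H \<gamma> - eps) / \<gamma>) / eps"
    using eps_pos by (simp add: field_simps)
  have p4: "\<forall>\<gamma>1 \<gamma>2. \<gamma>1 \<le> \<gamma>2 \<and> \<gamma>2 < 0 \<and> Eo (g \<gamma>1) \<le> eps \<and> Eo (g \<gamma>2) \<le> eps \<longrightarrow>
            (H \<gamma>1 / eps - 1) / \<gamma>1 \<le> (H \<gamma>2 / eps - 1) / \<gamma>2"
  proof (intro allI impI)
    fix a b :: real assume ab: "a \<le> b \<and> b < 0 \<and> Eo (g a) \<le> eps \<and> Eo (g b) \<le> eps"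
    have "(H a - eps) / a = ((Eo (g a) - eps) + a * S (g a)) / a" using H by simp
    also have "\<dots> \<le> ((Eo (g a) - eps) + b * S (g a)) / b"
      using ab by (intro phi_inc) auto
    also have "\<dots> \<le> (H b - eps) / b"
    proof -
      have "H b \<le> Eo (g a) + b * S (g a)" using gm[OF g_in, of b a] H by simp
      thus ?thesis using ab by (simp add: divide_simps)
    qed
    finally show "(H a / eps - 1) / a \<le> (H b / eps - 1) / b"
      unfolding conv using eps_pos by (intro divide_right_mono) auto
  qed
  have p5: "\<forall>\<gamma>1 \<gamma>2. \<gamma>1 \<le> \<gamma>2 \<and> \<gamma>2 < 0 \<and> Eo (g \<gamma>1) > eps \<and> Eo (g \<gamma>2) > eps \<longrightarrow>
            (H \<gamma>2 / eps - 1) / \<gamma>2 \<le> (H \<gamma>1 / eps - 1) / \<gamma>1"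
  proof (intro allI impI)
    fix a b :: real assume ab: "a \<le> b \<and> b < 0 \<and> Eo (g a) > eps \<and> Eo (g b) > eps"
    have "(H b - eps) / b = ((Eo (g b) - eps) + b * S (g b)) / b" using H by simp
    also have "\<dots> \<le> ((Eo (g b) - eps) + a * S (g b)) / a"
      using ab by (intro phi_dec) auto
    also have "\<dots> \<le> (H a - eps) / a"
    proof -
      have "H a \<le> Eo (g b) + a * S (g b)" using gm[OF g_in, of a b] H by simp
      moreover have "a < 0" using ab by simp
      ultimately show ?thesis by (simp add: divide_simps)
    qed
    finally show "(H b / eps - 1) / b \<le> (H a / eps - 1) / a"
      unfolding conv using eps_pos by (intro divide_right_mono) auto
  qed
  show ?thesis using p1 p2 p3 p4 p5 unfolding H_def Eo_def by simp
qed

end
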